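(* Assume (A1) and (A2). Then $Q$ is positive definite, and $$\|\hat AQ^{-1/2}\|_{2\to1}\le 1,\qquad \|Q^{-1/2}\|_{2\to1}\le\bar\kappa,\qquad Q\succeq\frac{1}{\bar\kappa^2}I_R.$$
   Context: $A\in\mathbb{R}^{D\times k}$ is a word-topic matrix (nonnegative entries, columns summing to $1$). $x^*\in\{z\in\mathbb{R}^k_{\ge0}:\sum z_i=1\}$. Assumption (A1): $R=\mathrm{supp}(x^* )$ has $|R|\le r$ and $x^*_i\ge\tau/r$ for all $i\in R$, where $\tau\in(0,1]$. Assumption (A2): for every $r$-sparse $v\in\mathbb{R}^k$, $\|Av\|_1\ge\|v\|_1/\bar\kappa$. Vectors supported on $R$ are identified with vectors in $\mathbb{R}^R$. $\hat A\in\mathbb{R}^{D\times R}$ is the submatrix of $A$ with columns in $R$, with rows $\hat a_i$. The Fisher information matrix is $Q=\sum_{i\in[D]:\hat a_i\neq 0}\hat a_i\hat a_i^\top/\langle\hat a_i,x^*\rangle$. For a matrix $M$, $\|M\|_{2\to1}=\sup_{\|z\|_2\le1}\|Mz\|_1$. *)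

theory Defs
  imports "HOL-Analysis.Analysis"
begin

(* Matrices are real-valued functions of two natural indices; a matrix "on a
   carrier S" is indexed by S x S.  Vectors are functions nat => real. *)

definition word_topic :: "nat \<Rightarrow> nat \<Rightarrow> (nat \<Rightarrow> nat \<Rightarrow> real) \<Rightarrow> bool" where
  "word_topic D k A \<longleftrightarrow> (\<forall>i<D. \<forall>j<k. A i j \<ge> 0) \<and> (\<forall>j<k. (\<Sum>i<D. A i j) = 1)"

definition in_simplex :: "nat \<Rightarrow> (nat \<Rightarrow> real) \<Rightarrow> bool" where
  "in_simplex k x \<longleftrightarrow> (\<forall>i<k. x i \<ge> 0) \<and> (\<Sum>i<k. x i) = 1"

definition supp :: "nat \<Rightarrow> (nat \<Rightarrow> real) \<Rightarrow> nat set" where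
  "supp k x = {i. i < k \<and> x i \<noteq> 0}"

definition A1 :: "nat \<Rightarrow> (nat \<Rightarrow> real) \<Rightarrow> nat \<Rightarrow> real \<Rightarrow> bool" where
  "A1 k x r \<tau> \<longleftrightarrow> card (supp k x) \<le> r \<and> (\<forall>i\<in>supp k x. x i \<ge> \<tau> / real r)"

definition A2 :: "nat \<Rightarrow> nat \<Rightarrow> (nat \<Rightarrow> nat \<Rightarrow> real) \<Rightarrow> nat \<Rightarrow> real \<Rightarrow> bool" where
  "A2 D k A r \<kappa> \<longleftrightarrow> (\<forall>v :: nat \<Rightarrow> real. card (supp k v) \<le> r \<longrightarrow>
      (\<Sum>i<D. \<bar>\<Sum>j<k. A i j * v j\<bar>) \<ge> (\<Sum>j<k. \<bar>v j\<bar>) / \<kappa>)"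

definition fisher :: "nat \<Rightarrow> nat set \<Rightarrow> (nat \<Rightarrow> nat \<Rightarrow> real) \<Rightarrow> (nat \<Rightarrow> real) \<Rightarrow> nat \<Rightarrow> nat \<Rightarrow> real" where
  "fisher D R A x = (\<lambda>j l. if j \<in> R \<and> l \<in> R then
      (\<Sum>i\<in>{i. i < D \<and> (\<exists>m\<in>R. A i m \<noteq> 0)}. A i j * A i l / (\<Sum>m\<in>R. A i m * x m))
     else 0)"

definition mat_mult :: "nat set \<Rightarrow> (nat \<Rightarrow> nat \<Rightarrow> real) \<Rightarrow> (nat \<Rightarrow> nat \<Rightarrow> real) \<Rightarrow> nat \<Rightarrow> nat \<Rightarrow> real" where
  "mat_mult S M N = (\<lambda>i l. \<Sum>j\<in>S. M i j * N j l)"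

definition id_on :: "nat set \<Rightarrow> nat \<Rightarrow> nat \<Rightarrow> real" where
  "id_on S = (\<lambda>j l. if j \<in> S \<and> l \<in> S \<and> j = l then 1 else 0)"

definition supported_on :: "nat set \<Rightarrow> (nat \<Rightarrow> nat \<Rightarrow> real) \<Rightarrow> bool" where
  "supported_on S M \<longleftrightarrow> (\<forall>j l. (j \<notin> S \<or> l \<notin> S) \<longrightarrow> M j l = 0)"

definition symmetric_on :: "nat set \<Rightarrow> (nat \<Rightarrow> nat \<Rightarrow> real) \<Rightarrow> bool" where
  "symmetric_on S M \<longleftrightarrow> (\<forall>j\<in>S. \<forall>l\<in>S. M j l = M l j)"

definition quad_form :: "nat set \<Rightarrow> (nat \<Rightarrow> nat \<Rightarrow> real) \<Rightarrow> (nat \<Rightarrow> real) \<Rightarrow> real" where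
  "quad_form S M z = (\<Sum>j\<in>S. \<Sum>l\<in>S. z j * M j l * z l)"

definition pos_semidef_on :: "nat set \<Rightarrow> (nat \<Rightarrow> nat \<Rightarrow> real) \<Rightarrow> bool" where
  "pos_semidef_on S M \<longleftrightarrow> symmetric_on S M \<and> (\<forall>z. quad_form S M z \<ge> 0)"

definition pos_def_on :: "nat set \<Rightarrow> (nat \<Rightarrow> nat \<Rightarrow> real) \<Rightarrow> bool" where
  "pos_def_on S M \<longleftrightarrow> symmetric_on S M \<and> (\<forall>z. (\<exists>j\<in>S. z j \<noteq> 0) \<longrightarrow> quad_form S M z > 0)"

definition loewner_ge :: "nat set \<Rightarrow> (nat \<Rightarrow> nat \<Rightarrow> real) \<Rightarrow> (nat \<Rightarrow> nat \<Rightarrow> real) \<Rightarrow> bool" where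
  "loewner_ge S M N \<longleftrightarrow> pos_semidef_on S (\<lambda>j l. M j l - N j l)"

definition mat_inv_on :: "nat set \<Rightarrow> (nat \<Rightarrow> nat \<Rightarrow> real) \<Rightarrow> nat \<Rightarrow> nat \<Rightarrow> real" where
  "mat_inv_on S M = (THE N. supported_on S N \<and>
      (\<forall>j\<in>S. \<forall>l\<in>S. mat_mult S N M j l = id_on S j l \<and> mat_mult S M N j l = id_on S j l))"

definition mat_sqrt_on :: "nat set \<Rightarrow> (nat \<Rightarrow> nat \<Rightarrow> real) \<Rightarrow> nat \<Rightarrow> nat \<Rightarrow> real" where
  "mat_sqrt_on S M = (THE P. supported_on S P \<and> pos_semidef_on S P \<and>
      (\<forall>j\<in>S. \<forall>l\<in>S. mat_mult S P P j l = M j l))"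

definition mat_inv_sqrt_on :: "nat set \<Rightarrow> (nat \<Rightarrow> nat \<Rightarrow> real) \<Rightarrow> nat \<Rightarrow> nat \<Rightarrow> real" where
  "mat_inv_sqrt_on S M = mat_inv_on S (mat_sqrt_on S M)"

definition norm_2_1 :: "nat set \<Rightarrow> nat set \<Rightarrow> (nat \<Rightarrow> nat \<Rightarrow> real) \<Rightarrow> real" where
  "norm_2_1 I S M = Sup {(\<Sum>i\<in>I. \<bar>\<Sum>j\<in>S. M i j * z j\<bar>) | z. (\<Sum>j\<in>S. (z j)\<^sup>2) \<le> 1}"

end

theory Submission
  imports Defs "HOL-Computational_Algebra.Formal_Power_Series"
begin


definition mv :: "nat set \<Rightarrow> (nat\<Rightarrow>nat\<Rightarrow>real) \<Rightarrow> (nat\<Rightarrow>real) \<Rightarrow> nat \<Rightarrow> real" where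
  "mv S M y = (\<lambda>j. \<Sum>l\<in>S. M j l * y l)"
definition nrm :: "nat set \<Rightarrow> (nat\<Rightarrow>real) \<Rightarrow> real" where
  "nrm S y = (\<Sum>j\<in>S. (y j)^2)"
definition bil :: "nat set \<Rightarrow> (nat\<Rightarrow>nat\<Rightarrow>real) \<Rightarrow> (nat\<Rightarrow>real) \<Rightarrow> (nat\<Rightarrow>real) \<Rightarrow> real" where
  "bil S M x y = (\<Sum>j\<in>S. \<Sum>l\<in>S. x j * M j l * y l)"
definition smat :: "(nat\<Rightarrow>nat\<Rightarrow>real) \<Rightarrow> bool" where
  "smat M \<longleftrightarrow> (\<forall>j l. M j l = M l j)"
primrec pw :: "nat set \<Rightarrow> (nat\<Rightarrow>nat\<Rightarrow>real) \<Rightarrow> nat \<Rightarrow> nat\<Rightarrow>nat\<Rightarrow>real" where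
  "pw S X 0 = id_on S" | "pw S X (Suc k) = mat_mult S X (pw S X k)"

lemma mm_assoc: "mat_mult S (mat_mult S A B) C = mat_mult S A (mat_mult S B C)"
proof (rule ext, rule ext)
  fix i l
  have "mat_mult S (mat_mult S A B) C i l = (\<Sum>j\<in>S. \<Sum>m\<in>S. A i m * B m j * C j l)"
    unfolding mat_mult_def by (simp add: sum_distrib_right)
  also have "\<dots> = (\<Sum>m\<in>S. \<Sum>j\<in>S. A i m * B m j * C j l)" by (rule sum.swap)
  also have "\<dots> = mat_mult S A (mat_mult S B C) i l"
    unfolding mat_mult_def by (simp add: sum_distrib_left mult.assoc)
  finally show "mat_mult S (mat_mult S A B) C i l = mat_mult S A (mat_mult S B C) i l" .
qed

lemma supp_mm: "supported_on S A \<Longrightarrow> supported_on S B \<Longrightarrow> supported_on S (mat_mult S A B)"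
  unfolding supported_on_def mat_mult_def by auto

lemma supp_id: "supported_on S (id_on S)"
  unfolding supported_on_def id_on_def by auto

lemma id_left: assumes "finite S" "supported_on S M" shows "mat_mult S (id_on S) M = M"
proof (rule ext, rule ext)
  fix i l
  show "mat_mult S (id_on S) M i l = M i l"
  proof (cases "i \<in> S")
    case True
    have "mat_mult S (id_on S) M i l = (\<Sum>j\<in>S. if j = i then M j l else 0)"
      unfolding mat_mult_def id_on_def using True by (intro sum.cong) auto
    also have "\<dots> = M i l" using True assms(1) by (simp add: sum.delta')
    finally show ?thesis .
  next
    case False thus ?thesis using assms(2) unfolding mat_mult_def id_on_def supported_on_def by auto
  qed
qed

lemma id_right: assumes "finite S" "supported_on S M" shows "mat_mult S M (id_on S) = M"
proof (rule ext, rule ext)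
  fix i l
  show "mat_mult S M (id_on S) i l = M i l"
  proof (cases "l \<in> S")
    case True
    have "mat_mult S M (id_on S) i l = (\<Sum>j\<in>S. if j = l then M i j else 0)"
      unfolding mat_mult_def id_on_def using True by (intro sum.cong) auto
    also have "\<dots> = M i l" using True assms(1) by (simp add: sum.delta')
    finally show ?thesis .
  next
    case False thus ?thesis using assms(2) unfolding mat_mult_def id_on_def supported_on_def by auto
  qed
qed

lemma mv_mm: "mv S (mat_mult S M N) y = mv S M (mv S N y)"
proof (rule ext)
  fix i
  have "mv S (mat_mult S M N) y i = (\<Sum>j\<in>S. \<Sum>m\<in>S. M i m * N m j * y j)"
    unfolding mat_mult_def mv_def by (simp add: sum_distrib_right)
  also have "\<dots> = (\<Sum>m\<in>S. \<Sum>j\<in>S. M i m * N m j * y j)" by (rule sum.swap)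
  also have "\<dots> = mv S M (mv S N y) i"
    unfolding mv_def by (simp add: sum_distrib_left mult.assoc)
  finally show "mv S (mat_mult S M N) y i = mv S M (mv S N y) i" .
qed

lemma bil_mv: "bil S M x y = (\<Sum>j\<in>S. x j * mv S M y j)"
  unfolding bil_def mv_def by (simp add: sum_distrib_left mult.assoc)

lemma bil_sym: "smat M \<Longrightarrow> bil S M x y = bil S M y x"
proof -
  assume "smat M"
  hence "bil S M x y = (\<Sum>j\<in>S. \<Sum>l\<in>S. y l * M l j * x j)"
    unfolding bil_def smat_def by (simp add: mult_ac)
  also have "\<dots> = bil S M y x" unfolding bil_def by (rule sum.swap)
  finally show ?thesis .
qed

lemma bil_mvT: "smat M \<Longrightarrow> bil S M x y = (\<Sum>l\<in>S. mv S M x l * y l)"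
  using bil_mv[of S M y x] bil_sym[of M S x y] by (simp add: mult.commute)

lemma bil_mm: "bil S (mat_mult S A B) x y = bil S A x (mv S B y)"
  unfolding bil_mv mv_mm ..

lemma mm_transpose: "smat M \<Longrightarrow> smat N \<Longrightarrow> mat_mult S M N j l = mat_mult S N M l j"
  unfolding mat_mult_def smat_def by (simp add: mult.commute)

lemma smat_id: "smat (id_on S)" unfolding smat_def id_on_def by auto

context
  fixes S X
  assumes fin: "finite S" and sX: "supported_on S X" and symX: "smat X"
begin

lemma pw_supp: "supported_on S (pw S X k)"
  by (induct k) (auto intro: supp_mm supp_id sX)

lemma pw_comm: "mat_mult S (pw S X k) X = mat_mult S X (pw S X k)"
proof (induct k)
  case 0 show ?case by (simp add: id_left id_right fin sX)
next
  case (Suc k)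
  have "mat_mult S (pw S X (Suc k)) X = mat_mult S X (mat_mult S (pw S X k) X)"
    by (simp add: mm_assoc)
  also have "\<dots> = mat_mult S X (pw S X (Suc k))" using Suc by simp
  finally show ?case .
qed

lemma pw_sym: "smat (pw S X k)"
proof (induct k)
  case 0 show ?case by (simp add: smat_id)
next
  case (Suc k)
  show ?case unfolding smat_def
  proof (intro allI)
    fix j l
    have "pw S X (Suc k) j l = mat_mult S X (pw S X k) j l" by simp
    also have "\<dots> = mat_mult S (pw S X k) X l j" by (rule mm_transpose[OF symX Suc])
    also have "\<dots> = pw S X (Suc k) l j" by (simp add: pw_comm)
    finally show "pw S X (Suc k) j l = pw S X (Suc k) l j" .
  qed
qed

lemma pw_add: "mat_mult S (pw S X m) (pw S X n) = pw S X (m + n)"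
  by (induct m) (simp_all add: id_left fin pw_supp mm_assoc)

lemma pw_SS: "bil S (pw S X (Suc (Suc k))) x x = bil S (pw S X k) (mv S X x) (mv S X x)"
proof -
  have "pw S X (Suc (Suc k)) = mat_mult S X (mat_mult S (pw S X k) X)"
    by (simp add: pw_comm)
  hence "bil S (pw S X (Suc (Suc k))) x x = bil S X x (mv S (mat_mult S (pw S X k) X) x)"
    by (simp add: bil_mm)
  also have "\<dots> = (\<Sum>l\<in>S. mv S X x l * mv S (pw S X k) (mv S X x) l)"
    by (simp add: bil_mvT[OF symX] mv_mm)
  also have "\<dots> = bil S (pw S X k) (mv S X x) (mv S X x)"
    by (simp add: bil_mv)
  finally show ?thesis .
qed

end


lemma bil_add_sub: "bil S M (\<lambda>j. x j + y j) (\<lambda>j. x j + y j) - bil S M (\<lambda>j. x j - y j) (\<lambda>j. x j - y j)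
   = 2 * bil S M x y + 2 * bil S M y x"
  unfolding bil_def by (simp add: algebra_simps sum.distrib sum_subtractf sum_distrib_left)

lemma nrm_add_sub: "nrm S (\<lambda>j. x j + y j) + nrm S (\<lambda>j. x j - y j) = 2 * nrm S x + 2 * nrm S y"
  unfolding nrm_def by (simp add: power2_eq_square algebra_simps sum.distrib sum_subtractf sum_distrib_left)

lemma polar:
  assumes sym: "smat M" and h: "\<And>x. \<bar>bil S M x x\<bar> \<le> t * nrm S x"
  shows "\<bar>bil S M x y\<bar> \<le> t * (nrm S x + nrm S y) / 2"
proof -
  have e: "4 * bil S M x y = bil S M (\<lambda>j. x j + y j) (\<lambda>j. x j + y j) - bil S M (\<lambda>j. x j - y j) (\<lambda>j. x j - y j)"
    using bil_add_sub[of S M x y] bil_sym[OF sym, of S y x] by simp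
  have "\<bar>4 * bil S M x y\<bar> \<le> t * nrm S (\<lambda>j. x j + y j) + t * nrm S (\<lambda>j. x j - y j)"
    unfolding e using h[of "\<lambda>j. x j + y j"] h[of "\<lambda>j. x j - y j"] by linarith
  also have "\<dots> = 2 * t * (nrm S x + nrm S y)" using nrm_add_sub[of S x y]
    by (simp add: algebra_simps) (metis distrib_left mult.commute mult_2)
  finally show ?thesis by simp
qed

lemma bil_scale: "bil S M (\<lambda>j. a * x j) (\<lambda>j. b * y j) = a * b * bil S M x y"
  unfolding bil_def by (simp add: sum_distrib_left mult_ac)

lemma nrm_scale: "nrm S (\<lambda>j. a * x j) = a^2 * nrm S x"
  unfolding nrm_def by (simp add: sum_distrib_left power_mult_distrib)

lemma nrm_nonneg: "nrm S x \<ge> 0" unfolding nrm_def by (simp add: sum_nonneg)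

lemma nrm_zero: "finite S \<Longrightarrow> nrm S x = 0 \<Longrightarrow> j \<in> S \<Longrightarrow> x j = 0"
  unfolding nrm_def using sum_nonneg_eq_0_iff[of S "\<lambda>j. (x j)^2"] by auto

lemma bil_id: assumes "finite S" shows "bil S (id_on S) x x = nrm S x"
proof -
  have "\<And>j. j \<in> S \<Longrightarrow> (\<Sum>l\<in>S. x j * id_on S j l * x l) = (\<Sum>l\<in>S. if l = j then x j * x l else 0)"
    by (intro sum.cong) (auto simp: id_on_def)
  hence "bil S (id_on S) x x = (\<Sum>j\<in>S. x j * x j)" unfolding bil_def
    using assms by (simp add: sum.delta')
  thus ?thesis unfolding nrm_def by (simp add: power2_eq_square)
qed

context
  fixes S X \<theta>
  assumes fin: "finite S" and sX: "supported_on S X" and symX: "smat X"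
    and th0: "\<theta> \<ge> 0" and hX: "\<And>x. \<bar>bil S X x x\<bar> \<le> \<theta> * nrm S x"
begin

lemma mvX_bound: "nrm S (mv S X x) \<le> \<theta>^2 * nrm S x"
proof -
  define y where "y = mv S X x"
  define Y where "Y = nrm S y"
  define N where "N = nrm S x"
  have Y0: "Y \<ge> 0" "N \<ge> 0" unfolding Y_def N_def by (simp_all add: nrm_nonneg)
  have YB: "Y = bil S X x y" unfolding Y_def y_def bil_mvT[OF symX] nrm_def
    by (simp add: power2_eq_square)
  show ?thesis
  proof (cases "Y = 0")
    case True thus ?thesis using Y0 th0 unfolding Y_def y_def N_def by simp
  next
    case False
    hence Yp: "Y > 0" using Y0 by simp
    have Np: "N > 0"
    proof (rule ccontr)
      assume "\<not> N > 0" hence "N = 0" using Y0 by simp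
      hence "\<forall>j\<in>S. x j = 0" using nrm_zero fin unfolding N_def by blast
      hence "\<forall>j. y j = 0" unfolding y_def mv_def by simp
      hence "Y = 0" unfolding Y_def nrm_def by simp
      thus False using Yp by simp
    qed
    define s where "s = sqrt (sqrt Y / sqrt N)"
    have sp: "s > 0" unfolding s_def using Yp Np by simp
    have s2: "s^2 = sqrt Y / sqrt N" unfolding s_def using Yp Np by simp
    have "Y = bil S X (\<lambda>j. s * x j) (\<lambda>j. (1/s) * y j)"
      unfolding bil_scale YB using sp by simp
    also have "\<dots> \<le> \<bar>\<dots>\<bar>" by simp
    also have "\<dots> \<le> \<theta> * (nrm S (\<lambda>j. s * x j) + nrm S (\<lambda>j. (1/s) * y j)) / 2"
      by (rule polar[OF symX hX])
    also have "\<dots> = \<theta> * (s^2 * N + Y / s^2) / 2"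
      unfolding nrm_scale N_def Y_def by (simp add: power_divide)
    also have "s^2 * N = sqrt Y * sqrt N" unfolding s2 using Np
      by (simp add: field_simps)
    also have "Y / s^2 = sqrt Y * sqrt N" unfolding s2 using Np Yp
      by (simp add: field_simps)
    finally have "Y \<le> \<theta> * (sqrt Y * sqrt N)" by (simp add: mult_ac)
    hence "sqrt Y * sqrt Y \<le> (\<theta> * sqrt N) * sqrt Y" using Y0 by (simp only: real_sqrt_mult_self) (simp add: mult_ac)
    hence "sqrt Y \<le> \<theta> * sqrt N" by (rule mult_right_le_imp_le[OF _ real_sqrt_gt_zero[OF Yp]])
    hence "(sqrt Y)^2 \<le> (\<theta> * sqrt N)^2" using Yp by (intro power_mono) auto
    thus ?thesis using Y0 unfolding Y_def N_def y_def by (simp add: power_mult_distrib)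
  qed
qed

lemma pw_form: "\<bar>bil S (pw S X k) x x\<bar> \<le> \<theta>^k * nrm S x"
proof (induct k arbitrary: x rule: less_induct)
  case (less k)
  show ?case
  proof (cases k)
    case 0 thus ?thesis by (simp add: bil_id fin nrm_nonneg)
  next
    case (Suc m)
    show ?thesis
    proof (cases m)
      case 0
      have "pw S X 1 = X" by (simp add: id_right fin sX)
      thus ?thesis using Suc 0 hX by simp
    next
      case (Suc n)
      have "\<bar>bil S (pw S X k) x x\<bar> = \<bar>bil S (pw S X n) (mv S X x) (mv S X x)\<bar>"
        using \<open>k = Suc m\<close> Suc pw_SS[OF fin sX symX] by simp
      also have "\<dots> \<le> \<theta>^n * nrm S (mv S X x)" using less \<open>k = Suc m\<close> Suc by simp
      also have "\<dots> \<le> \<theta>^n * (\<theta>^2 * nrm S x)" using mvX_bound th0 by (intro mult_left_mono) auto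
      finally show ?thesis using \<open>k = Suc m\<close> Suc by (simp add: power_add mult_ac power2_eq_square)
    qed
  qed
qed

lemma pw_entry: "\<bar>pw S X k i j\<bar> \<le> \<theta>^k"
proof (cases "i \<in> S \<and> j \<in> S")
  case True
  define e :: "nat \<Rightarrow> nat \<Rightarrow> real" where "e = (\<lambda>a m. if m = a then (1::real) else 0)"
  have ne: "nrm S (e a) = 1" if "a \<in> S" for a
  proof -
    have "nrm S (e a) = (\<Sum>j\<in>S. if j = a then 1 else 0)" unfolding nrm_def
      by (intro sum.cong) (auto simp: e_def)
    thus ?thesis using that fin by (simp add: sum.delta')
  qed
  have "bil S (pw S X k) (e i) (e j) = pw S X k i j"
  proof -
    have i1: "\<And>P z. (if P then (1::real) else 0) * z = (if P then z else 0)" by simp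
    have i2: "\<And>P z. z * (if P then (1::real) else 0) = (if P then z else 0)" by simp
    show ?thesis unfolding bil_def e_def i1 i2 using True fin by (simp add: sum.delta')
  qed
  moreover have "\<bar>bil S (pw S X k) (e i) (e j)\<bar> \<le> \<theta>^k * (nrm S (e i) + nrm S (e j)) / 2"
    by (rule polar[OF pw_sym[OF fin sX symX] pw_form])
  ultimately show ?thesis using ne True by simp
next
  case False
  hence "pw S X k i j = 0" using pw_supp[OF fin sX symX, of k] unfolding supported_on_def by auto
  thus ?thesis using th0 by simp
qed

end


definition Fs :: "nat set \<Rightarrow> (nat\<Rightarrow>nat\<Rightarrow>real) \<Rightarrow> real \<Rightarrow> nat \<Rightarrow> nat \<Rightarrow> real" where
  "Fs S X a = (\<lambda>i j. \<Sum>n. (a gchoose n) * pw S X n i j)"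

lemma gbin_rec: "((a::real) gchoose Suc k) = (a - real k) / (real k + 1) * (a gchoose k)"
proof -
  have "a * (a gchoose k) = real k * (a gchoose k) + real (Suc k) * (a gchoose (Suc k))"
    by (rule gbinomial_mult_1)
  hence "real (Suc k) * (a gchoose (Suc k)) = (a - real k) * (a gchoose k)" by (simp add: algebra_simps)
  thus ?thesis by (simp add: field_simps)
qed

lemma gbin_bound: "\<bar>a\<bar> \<le> 1 \<Longrightarrow> \<bar>(a::real) gchoose n\<bar> \<le> 1"
proof (induct n)
  case 0 thus ?case by simp
next
  case (Suc n)
  have f: "\<bar>(a - real n) / (real n + 1)\<bar> \<le> 1" using Suc(2) by (simp add: abs_le_iff field_simps)
  have "\<bar>a gchoose Suc n\<bar> = \<bar>(a - real n) / (real n + 1)\<bar> * \<bar>a gchoose n\<bar>"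
    by (simp add: gbin_rec abs_mult)
  also have "\<dots> \<le> 1 * 1" using f Suc by (intro mult_mono) auto
  finally show ?case by simp
qed

lemma gbin_half_sign: "n \<ge> 1 \<Longrightarrow> ((1/2::real) gchoose n) * (-1)^n \<le> 0"
proof (induct n rule: dec_induct)
  case base thus ?case by simp
next
  case (step n)
  have eq: "((1/2::real) gchoose Suc n) * (-1)^(Suc n) = ((real n - 1/2) / (real n + 1)) * (((1/2::real) gchoose n) * (-1)^n)"
    by (simp add: gbin_rec field_simps)
  have "(real n - 1/2) / (real n + 1) \<ge> 0" using step(1) by simp
  thus ?case unfolding eq using step(3) by (rule mult_nonneg_nonpos)
qed

lemma gbin_one: "(1::real) gchoose n = (if n \<le> 1 then 1 else 0)"
proof (cases n)
  case 0 thus ?thesis by simp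
next
  case (Suc k)
  have "((0::real) + 1) gchoose Suc k = (0 gchoose k) + (0 gchoose Suc k)" by (rule gbinomial_Suc_Suc)
  thus ?thesis using Suc by (cases k) auto
qed

context
  fixes S X \<theta>
  assumes fin: "finite S" and sX: "supported_on S X" and symX: "smat X"
    and th0: "\<theta> \<ge> 0" and th1: "\<theta> < 1" and hX: "\<And>x. \<bar>bil S X x x\<bar> \<le> \<theta> * nrm S x"
begin

lemma term_summable: assumes "\<bar>a\<bar> \<le> 1"
  shows "summable (\<lambda>n. norm ((a gchoose n) * pw S X n i j))"
proof (rule summable_comparison_test[of _ "\<lambda>n. \<theta>^n"])
  show "\<exists>N. \<forall>n\<ge>N. norm (norm ((a gchoose n) * pw S X n i j)) \<le> \<theta> ^ n"
  proof (intro exI allI impI)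
    fix n
    have "\<bar>a gchoose n\<bar> * \<bar>pw S X n i j\<bar> \<le> 1 * \<theta>^n"
      using gbin_bound[OF assms] pw_entry[OF fin sX symX th0 hX] by (intro mult_mono) auto
    thus "norm (norm ((a gchoose n) * pw S X n i j)) \<le> \<theta> ^ n" by (simp add: abs_mult)
  qed
  show "summable (\<lambda>n. \<theta>^n)" using th0 th1 by (simp add: summable_geometric)
qed

lemma Fs_sums: "\<bar>a\<bar> \<le> 1 \<Longrightarrow> (\<lambda>n. (a gchoose n) * pw S X n i j) sums Fs S X a i j"
  unfolding Fs_def using summable_norm_cancel[OF term_summable] by (simp add: summable_sums)

lemma Fs_mult: assumes a: "\<bar>a\<bar> \<le> 1" and b: "\<bar>b\<bar> \<le> 1" and ab: "\<bar>a + b\<bar> \<le> 1"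
  shows "mat_mult S (Fs S X a) (Fs S X b) i l = Fs S X (a + b) i l"
proof -
  have "\<And>j. j \<in> S \<Longrightarrow> (\<lambda>k. \<Sum>m\<le>k. ((a gchoose m) * pw S X m i j) * ((b gchoose (k - m)) * pw S X (k - m) j l))
       sums (Fs S X a i j * Fs S X b j l)"
    unfolding Fs_def by (rule Cauchy_product_sums[OF term_summable[OF a] term_summable[OF b]])
  hence "(\<lambda>k. \<Sum>j\<in>S. \<Sum>m\<le>k. ((a gchoose m) * pw S X m i j) * ((b gchoose (k - m)) * pw S X (k - m) j l))
       sums (\<Sum>j\<in>S. Fs S X a i j * Fs S X b j l)"
    by (rule sums_sum)
  moreover have "(\<Sum>j\<in>S. \<Sum>m\<le>k. ((a gchoose m) * pw S X m i j) * ((b gchoose (k - m)) * pw S X (k - m) j l))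
      = ((a + b) gchoose k) * pw S X k i l" for k
  proof -
    have "(\<Sum>j\<in>S. \<Sum>m\<le>k. ((a gchoose m) * pw S X m i j) * ((b gchoose (k - m)) * pw S X (k - m) j l))
       = (\<Sum>m\<le>k. (a gchoose m) * (b gchoose (k - m)) * (\<Sum>j\<in>S. pw S X m i j * pw S X (k - m) j l))"
    proof -
      have "(\<Sum>j\<in>S. \<Sum>m\<le>k. ((a gchoose m) * pw S X m i j) * ((b gchoose (k - m)) * pw S X (k - m) j l))
        = (\<Sum>m\<le>k. \<Sum>j\<in>S. ((a gchoose m) * pw S X m i j) * ((b gchoose (k - m)) * pw S X (k - m) j l))"
        by (rule sum.swap)
      also have "\<dots> = (\<Sum>m\<le>k. (a gchoose m) * (b gchoose (k - m)) * (\<Sum>j\<in>S. pw S X m i j * pw S X (k - m) j l))"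
        unfolding sum_distrib_left by (intro sum.cong refl) (simp only: mult_ac)
      finally show ?thesis .
    qed
    also have "\<dots> = (\<Sum>m\<le>k. (a gchoose m) * (b gchoose (k - m)) * pw S X k i l)"
    proof (intro sum.cong refl)
      fix m assume "m \<in> {..k}"
      hence "m + (k - m) = k" by simp
      have "mat_mult S (pw S X m) (pw S X (k - m)) i l = pw S X (m + (k - m)) i l"
        by (simp only: pw_add[OF fin sX symX])
      hence "(\<Sum>j\<in>S. pw S X m i j * pw S X (k - m) j l) = pw S X k i l"
        unfolding mat_mult_def \<open>m + (k - m) = k\<close> .
      thus "(a gchoose m) * (b gchoose (k - m)) * (\<Sum>j\<in>S. pw S X m i j * pw S X (k - m) j l)
          = (a gchoose m) * (b gchoose (k - m)) * pw S X k i l" by simp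
    qed
    also have "\<dots> = (\<Sum>m=0..k. (a gchoose m) * (b gchoose (k - m))) * pw S X k i l"
      by (simp add: sum_distrib_right atMost_atLeast0)
    also have "\<dots> = ((a + b) gchoose k) * pw S X k i l" by (simp add: gbinomial_Vandermonde)
    finally show ?thesis .
  qed
  ultimately have "(\<lambda>k. ((a + b) gchoose k) * pw S X k i l) sums mat_mult S (Fs S X a) (Fs S X b) i l"
    unfolding mat_mult_def by simp
  thus ?thesis using Fs_sums[OF ab] sums_unique2 by blast
qed

lemma Fs0: "Fs S X 0 = id_on S"
proof (rule ext, rule ext)
  fix i j
  have "Fs S X 0 i j = (\<Sum>n\<in>{0}. (0 gchoose n) * pw S X n i j)"
    unfolding Fs_def by (rule suminf_finite) (auto simp: gbinomial_0_left)
  thus "Fs S X 0 i j = id_on S i j" by simp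
qed

lemma Fs1: "Fs S X 1 i j = id_on S i j + X i j"
proof -
  have "Fs S X 1 i j = (\<Sum>n\<in>{0,1}. (1 gchoose n) * pw S X n i j)"
    unfolding Fs_def by (rule suminf_finite) (auto simp: gbin_one)
  moreover have "pw S X 1 = X" by (simp add: id_right fin sX)
  ultimately show ?thesis by simp
qed

lemma Fs_sym: "smat (Fs S X a)"
  unfolding smat_def Fs_def using pw_sym[OF fin sX symX] unfolding smat_def by simp

lemma Fs_supp: "supported_on S (Fs S X a)"
  unfolding supported_on_def Fs_def using pw_supp[OF fin sX symX] unfolding supported_on_def by simp

lemma Fs_bil_sums: assumes "\<bar>a\<bar> \<le> 1"
  shows "(\<lambda>n. (a gchoose n) * bil S (pw S X n) x y) sums bil S (Fs S X a) x y"
proof -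
  have "(\<lambda>n. \<Sum>j\<in>S. \<Sum>l\<in>S. x j * ((a gchoose n) * pw S X n j l) * y l) sums bil S (Fs S X a) x y"
    unfolding bil_def
    by (rule sums_sum, rule sums_sum, rule sums_mult2, rule sums_mult, rule Fs_sums[OF assms])
  thus ?thesis unfolding bil_def by (simp add: sum_distrib_left mult_ac)
qed

lemma Fs_half_psd: "bil S (Fs S X (1/2)) x x \<ge> 0"
proof -
  define N where "N = nrm S x"
  have N0: "N \<ge> 0" unfolding N_def by (rule nrm_nonneg)
  have s1: "(\<lambda>n. ((1/2) gchoose n) * bil S (pw S X n) x x) sums bil S (Fs S X (1/2)) x x"
    by (rule Fs_bil_sums) simp
  have s2: "(\<lambda>n. ((1/2) gchoose n) * (-\<theta>)^n * N) sums ((1 + - \<theta>) powr (1/2) * N)"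
    using sums_mult2[OF gen_binomial_real[of "-\<theta>" "1/2"], of N] th0 th1 by simp
  have le: "((1/2) gchoose n) * (-\<theta>)^n * N \<le> ((1/2) gchoose n) * bil S (pw S X n) x x" for n
  proof (cases "n = 0")
    case True thus ?thesis by (simp add: bil_id fin N_def)
  next
    case False
    define g where "g = ((1/2::real) gchoose n) * (-1)^n"
    have g0: "g \<le> 0" unfolding g_def using gbin_half_sign False by simp
    define b where "b = bil S (pw S X n) x x"
    have "\<bar>b\<bar> \<le> \<theta>^n * N" unfolding b_def N_def by (rule pw_form[OF fin sX symX th0 hX])
    have "(-1)^n * b \<le> \<bar>(-1)^n * b\<bar>" by (rule abs_ge_self)
    also have "\<dots> = \<bar>b\<bar>" by (simp add: abs_mult power_abs)
    finally have bb: "(-1)^n * b \<le> \<theta>^n * N" using \<open>\<bar>b\<bar> \<le> \<theta>^n * N\<close> by linarith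
    have "g * (\<theta>^n * N) \<le> g * ((-1)^n * b)" using bb g0 by (rule mult_left_mono_neg)
    moreover have "((1/2) gchoose n) * (-\<theta>)^n * N = g * (\<theta>^n * N)"
      unfolding g_def power_minus[of \<theta>] by (simp only: mult.assoc)
    moreover have "((1/2) gchoose n) * b = g * ((-1)^n * b)"
    proof -
      have m1: "(-1::real)^n * (-1)^n = 1" by (simp flip: power_mult_distrib)
      have "g * ((-1)^n * b) = ((1/2) gchoose n) * (((-1)^n * (-1)^n) * b)"
        unfolding g_def by (simp only: mult.assoc)
      also have "\<dots> = ((1/2) gchoose n) * b" by (simp only: m1 mult_1_left)
      finally show ?thesis by (rule sym)
    qed
    ultimately have "((1/2) gchoose n) * (-\<theta>)^n * N \<le> ((1/2) gchoose n) * b" by linarith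
    thus ?thesis unfolding b_def .
  qed
  have "(1 + - \<theta>) powr (1/2) * N \<le> bil S (Fs S X (1/2)) x x"
    using sums_le[OF le s2 s1] .
  moreover have "(1 + - \<theta>) powr (1/2) * N \<ge> 0" using N0 by simp
  ultimately show ?thesis by linarith
qed

end


lemma quad_bil: "quad_form S M z = bil S M z z"
  unfolding quad_form_def bil_def ..

lemma supp_sym_smat: "supported_on S M \<Longrightarrow> symmetric_on S M \<Longrightarrow> smat M"
  unfolding supported_on_def symmetric_on_def smat_def by metis

lemma supp_eq: "supported_on S M \<Longrightarrow> supported_on S N \<Longrightarrow> (\<And>j l. j \<in> S \<Longrightarrow> l \<in> S \<Longrightarrow> M j l = N j l) \<Longrightarrow> M = N"
  unfolding supported_on_def by (intro ext) metis

lemma bil_expand: "bil S M (\<lambda>j. y j + t * w j) (\<lambda>j. y j + t * w j)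
   = bil S M y y + t * bil S M y w + t * bil S M w y + t^2 * bil S M w w"
  unfolding bil_def by (simp add: algebra_simps sum.distrib sum_distrib_left power2_eq_square)

lemma psd_null:
  assumes fin: "finite S" and sym: "smat M" and psd: "\<And>z. bil S M z z \<ge> 0" and y0: "bil S M y y = 0"
    and a: "a \<in> S"
  shows "mv S M y a = 0"
proof -
  define w where "w = mv S M y"
  define W where "W = nrm S w"
  define c where "c = bil S M w w"
  have c0: "c \<ge> 0" unfolding c_def by (rule psd)
  have W0: "W \<ge> 0" unfolding W_def by (rule nrm_nonneg)
  have yw: "bil S M y w = W" unfolding W_def w_def bil_mvT[OF sym] nrm_def by (simp add: power2_eq_square)
  have wy: "bil S M w y = W" using yw bil_sym[OF sym] by simp
  define t where "t = - W / (c + 1)"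
  have "0 \<le> bil S M (\<lambda>j. y j + t * w j) (\<lambda>j. y j + t * w j)" by (rule psd)
  also have "\<dots> = 2 * t * W + t^2 * c" unfolding bil_expand y0 yw wy c_def by simp
  finally have X0: "0 \<le> 2 * t * W + t^2 * c" .
  have c1: "c + 1 \<noteq> 0" using c0 by simp
  have tc: "t * (c + 1) = - W" unfolding t_def using c1 by simp
  have "(c+1)^2 * (2 * t * W + t^2 * c) = 2 * (t * (c+1)) * W * (c+1) + (t * (c+1))^2 * c"
    by (simp add: power2_eq_square algebra_simps)
  also have "\<dots> = -(W^2 * (c + 2))" unfolding tc by (simp add: power2_eq_square algebra_simps)
  finally have eq: "(c+1)^2 * (2 * t * W + t^2 * c) = -(W^2 * (c + 2))" .
  have "0 \<le> (c+1)^2 * (2 * t * W + t^2 * c)" using X0 by simp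
  hence "W^2 * (c + 2) \<le> 0" using eq by linarith
  hence "W^2 \<le> 0" using c0 by (simp add: mult_le_0_iff)
  hence "W = 0" by simp
  thus ?thesis using nrm_zero[OF fin _ a] unfolding W_def w_def by blast
qed

definition tr :: "nat set \<Rightarrow> (nat\<Rightarrow>nat\<Rightarrow>real) \<Rightarrow> real" where
  "tr S M = (\<Sum>j\<in>S. M j j)"

lemma tr_comm: "tr S (mat_mult S A B) = tr S (mat_mult S B A)"
  unfolding tr_def mat_mult_def by (subst sum.swap) (simp add: mult.commute)

lemma sqrt_unique:
  assumes fin: "finite S"
    and sP: "supported_on S P" and sP': "supported_on S P'"
    and yP: "smat P" and yP': "smat P'"
    and pP: "\<And>z. bil S P z z \<ge> 0" and pP': "\<And>z. bil S P' z z \<ge> 0"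
    and sq: "mat_mult S P P = mat_mult S P' P'"
  shows "P = P'"
proof -
  define D where "D = (\<lambda>j l. P j l - P' j l)"
  define Sm where "Sm = (\<lambda>j l. P j l + P' j l)"
  have yD: "smat D" using yP yP' unfolding D_def smat_def by simp
  have ySm: "smat Sm" using yP yP' unfolding Sm_def smat_def by simp
  have e1: "mat_mult S P D j l + mat_mult S D P' j l = 0" for j l
  proof -
    have "mat_mult S P D j l + mat_mult S D P' j l = mat_mult S P P j l - mat_mult S P' P' j l"
      unfolding mat_mult_def D_def by (simp add: algebra_simps sum_subtractf)
    thus ?thesis using sq by simp
  qed
  have e2: "mat_mult S D P j l + mat_mult S P' D j l = 0" for j l
    using e1[of l j] mm_transpose[OF yD yP, of S j l] mm_transpose[OF yP' yD, of S j l] by simp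
  have e3: "mat_mult S Sm D j l = - mat_mult S D Sm j l" for j l
  proof -
    have "mat_mult S Sm D j l = mat_mult S P D j l + mat_mult S P' D j l"
      unfolding mat_mult_def Sm_def by (simp add: algebra_simps sum.distrib)
    moreover have "mat_mult S D Sm j l = mat_mult S D P j l + mat_mult S D P' j l"
      unfolding mat_mult_def Sm_def by (simp add: algebra_simps sum.distrib)
    ultimately show ?thesis using e1[of j l] e2[of j l] by linarith
  qed
  define T where "T = mat_mult S D (mat_mult S Sm D)"
  have T1: "T = (\<lambda>j l. - mat_mult S (mat_mult S D D) Sm j l)"
  proof -
    have "T = mat_mult S D (\<lambda>j l. - mat_mult S D Sm j l)" unfolding T_def
      using e3 by (metis ext)
    also have "\<dots> = (\<lambda>j l. - mat_mult S D (mat_mult S D Sm) j l)"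
      unfolding mat_mult_def by (simp add: sum_negf)
    finally show ?thesis by (simp add: mm_assoc)
  qed
  have "tr S T = - tr S (mat_mult S (mat_mult S D D) Sm)"
    unfolding T1 tr_def by (simp add: sum_negf)
  also have "tr S (mat_mult S (mat_mult S D D) Sm) = tr S (mat_mult S D (mat_mult S D Sm))"
    by (simp add: mm_assoc)
  also have "\<dots> = tr S (mat_mult S (mat_mult S D Sm) D)" by (rule tr_comm)
  also have "\<dots> = tr S T" unfolding T_def by (simp add: mm_assoc)
  finally have tr0: "tr S T = 0" by simp
  define col where "col = (\<lambda>j a. D a j)"
  have Tjj: "T j j = bil S Sm (col j) (col j)" for j
    unfolding T_def mat_mult_def bil_def col_def using yD unfolding smat_def
    by (simp add: sum_distrib_left sum_distrib_right mult_ac)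
  have Tnn: "T j j \<ge> 0" for j
  proof -
    have "bil S Sm (col j) (col j) = bil S P (col j) (col j) + bil S P' (col j) (col j)"
      unfolding bil_def Sm_def by (simp add: ring_distribs sum.distrib)
    thus ?thesis using Tjj pP pP' by (metis add_nonneg_nonneg)
  qed
  have Tz: "T j j = 0" if "j \<in> S" for j
    using tr0 sum_nonneg_eq_0_iff[of S "\<lambda>j. T j j"] fin Tnn that unfolding tr_def by auto
  have PD: "mat_mult S P D a j = 0 \<and> mat_mult S P' D a j = 0" if "a \<in> S" "j \<in> S" for a j
  proof -
    have bs: "bil S P (col j) (col j) + bil S P' (col j) (col j) = 0"
      using Tz[OF that(2)] Tjj[of j] unfolding bil_def Sm_def by (simp add: ring_distribs sum.distrib)
    hence b1: "bil S P (col j) (col j) = 0" and b2: "bil S P' (col j) (col j) = 0"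
      using pP[of "col j"] pP'[of "col j"] by linarith+
    have "mv S P (col j) a = 0" by (rule psd_null[OF fin yP pP b1 that(1)])
    moreover have "mv S P' (col j) a = 0" by (rule psd_null[OF fin yP' pP' b2 that(1)])
    ultimately show ?thesis unfolding mv_def mat_mult_def col_def by simp
  qed
  have DD: "mat_mult S D D j j = 0" if "j \<in> S" for j
  proof -
    have "mat_mult S D D j j = mat_mult S (\<lambda>j l. P j l - P' j l) D j j" by (simp only: D_def)
    also have "\<dots> = mat_mult S P D j j - mat_mult S P' D j j"
      unfolding mat_mult_def by (simp only: left_diff_distrib sum_subtractf)
    finally have "mat_mult S D D j j = mat_mult S P D j j - mat_mult S P' D j j" .
    thus ?thesis using PD[OF that that] by simp
  qed
  have "D a j = 0" if "a \<in> S" "j \<in> S" for a j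
  proof -
    have "mat_mult S D D j j = (\<Sum>a\<in>S. (D a j)^2)"
      unfolding mat_mult_def using yD unfolding smat_def by (simp add: power2_eq_square)
    hence "nrm S (col j) = 0" using DD[OF that(2)] unfolding nrm_def col_def by simp
    thus ?thesis using nrm_zero[OF fin _ that(1)] unfolding col_def by blast
  qed
  thus ?thesis using supp_eq[OF sP sP'] unfolding D_def by simp
qed

lemma inv_unique:
  assumes fin: "finite S" and sM: "supported_on S M" and sN: "supported_on S N" and sN': "supported_on S N'"
    and h1: "\<And>j l. j \<in> S \<Longrightarrow> l \<in> S \<Longrightarrow> mat_mult S N M j l = id_on S j l"
    and h2: "\<And>j l. j \<in> S \<Longrightarrow> l \<in> S \<Longrightarrow> mat_mult S M N' j l = id_on S j l"
  shows "N = N'"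
proof -
  have a: "mat_mult S N M = id_on S" by (rule supp_eq[OF supp_mm[OF sN sM] supp_id h1])
  have b: "mat_mult S M N' = id_on S" by (rule supp_eq[OF supp_mm[OF sM sN'] supp_id h2])
  have "N = mat_mult S N (id_on S)" by (simp add: id_right fin sN)
  also have "\<dots> = mat_mult S (mat_mult S N M) N'" by (simp add: b mm_assoc)
  also have "\<dots> = N'" by (simp add: a id_left fin sN')
  finally show ?thesis .
qed


lemma sum_sq_le_sq_sum: fixes a :: "nat \<Rightarrow> real" shows "finite S \<Longrightarrow> (\<forall>j\<in>S. a j \<ge> 0) \<Longrightarrow> (\<Sum>j\<in>S. (a j)^2) \<le> (\<Sum>j\<in>S. a j)^2"
proof (induct S rule: finite_induct)
  case empty thus ?case by simp
next
  case (insert b F)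
  have s0: "(\<Sum>j\<in>F. a j) \<ge> 0" using insert by (simp add: sum_nonneg)
  have "(\<Sum>j\<in>insert b F. (a j)^2) = (a b)^2 + (\<Sum>j\<in>F. (a j)^2)" using insert by simp
  also have "\<dots> \<le> (a b)^2 + (\<Sum>j\<in>F. a j)^2" using insert by simp
  also have "\<dots> \<le> (a b + (\<Sum>j\<in>F. a j))^2" using s0 insert(4)
    by (simp add: power2_eq_square algebra_simps)
  finally show ?case using insert by simp
qed

lemma bil_bound: assumes fin: "finite S"
  shows "\<bar>bil S M z z\<bar> \<le> (\<Sum>j\<in>S. \<Sum>l\<in>S. \<bar>M j l\<bar>) * nrm S z"
proof -
  have sq: "(z j)^2 \<le> nrm S z" if "j \<in> S" for j
    unfolding nrm_def using fin that by (intro member_le_sum) auto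
  have t: "\<bar>z j * M j l * z l\<bar> \<le> \<bar>M j l\<bar> * nrm S z" if "j \<in> S" "l \<in> S" for j l
  proof -
    have "\<bar>z j\<bar> * \<bar>z l\<bar> \<le> ((z j)^2 + (z l)^2) / 2"
      using sum_squares_bound[of "\<bar>z j\<bar>" "\<bar>z l\<bar>"] by (simp add: power2_eq_square algebra_simps)
    also have "\<dots> \<le> nrm S z" using sq[OF that(1)] sq[OF that(2)] by simp
    finally have "\<bar>z j\<bar> * \<bar>z l\<bar> \<le> nrm S z" .
    hence "\<bar>M j l\<bar> * (\<bar>z j\<bar> * \<bar>z l\<bar>) \<le> \<bar>M j l\<bar> * nrm S z" by (intro mult_left_mono) auto
    thus ?thesis by (simp add: abs_mult mult_ac)
  qed
  have "\<bar>bil S M z z\<bar> \<le> (\<Sum>j\<in>S. \<Sum>l\<in>S. \<bar>z j * M j l * z l\<bar>)"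
    unfolding bil_def by (rule order_trans[OF sum_abs]) (intro sum_mono sum_abs)
  also have "\<dots> \<le> (\<Sum>j\<in>S. \<Sum>l\<in>S. \<bar>M j l\<bar> * nrm S z)"
    by (intro sum_mono t)
  also have "\<dots> = (\<Sum>j\<in>S. \<Sum>l\<in>S. \<bar>M j l\<bar>) * nrm S z" by (simp add: sum_distrib_right)
  finally show ?thesis .
qed

lemma weighted_cs:
  fixes u om :: "'a \<Rightarrow> real"
  assumes fin: "finite I" and om: "\<And>i. i \<in> I \<Longrightarrow> om i > 0" and W: "(\<Sum>i\<in>I. om i) \<le> 1"
  shows "(\<Sum>i\<in>I. \<bar>u i\<bar>)^2 \<le> (\<Sum>i\<in>I. (u i)^2 / om i)"
proof -
  define s where "s = (\<Sum>i\<in>I. \<bar>u i\<bar>)"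
  define q where "q = (\<Sum>i\<in>I. (u i)^2 / om i)"
  have q0: "q \<ge> 0" unfolding q_def by (rule sum_nonneg) (use om in \<open>auto intro: divide_nonneg_pos\<close>)
  have s0: "s \<ge> 0" unfolding s_def by (simp add: sum_nonneg)
  have key: "2 * t * s \<le> q + t^2" if t0: "t > 0" for t
  proof -
    have "2 * t * \<bar>u i\<bar> \<le> (u i)^2 / om i + t^2 * om i" if i: "i \<in> I" for i
    proof -
      have o: "om i > 0" using om[OF i] .
      have "0 \<le> (\<bar>u i\<bar> - t * om i)^2" by simp
      hence "2 * t * \<bar>u i\<bar> * om i \<le> (u i)^2 + t^2 * om i * om i"
        by (simp add: power2_eq_square algebra_simps)
      moreover have "((u i)^2 / om i + t^2 * om i) * om i = (u i)^2 + t^2 * om i * om i"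
        using o by (simp add: distrib_right)
      ultimately have "(2 * t * \<bar>u i\<bar>) * om i \<le> ((u i)^2 / om i + t^2 * om i) * om i"
        by simp
      thus ?thesis using o by (rule mult_right_le_imp_le)
    qed
    hence "(\<Sum>i\<in>I. 2 * t * \<bar>u i\<bar>) \<le> (\<Sum>i\<in>I. (u i)^2 / om i + t^2 * om i)" by (rule sum_mono)
    hence "2 * t * s \<le> q + t^2 * (\<Sum>i\<in>I. om i)"
      unfolding s_def q_def by (simp add: sum.distrib sum_distrib_left)
    also have "\<dots> \<le> q + t^2 * 1" using W by (intro add_left_mono mult_left_mono) auto
    finally show ?thesis by simp
  qed
  show ?thesis
  proof (cases "s = 0")
    case True thus ?thesis using q0 unfolding s_def q_def by simp
  next
    case False
    hence "s > 0" using s0 by simp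
    from key[OF this] have "2 * s * s \<le> q + s^2" .
    hence "s^2 \<le> q" by (simp add: power2_eq_square)
    thus ?thesis unfolding s_def q_def .
  qed
qed


context
  fixes D k r :: nat and A :: "nat \<Rightarrow> nat \<Rightarrow> real" and x :: "nat \<Rightarrow> real" and \<tau> \<kappa> :: real
  assumes wt: "word_topic D k A" and sx: "in_simplex k x" and a1: "A1 k x r \<tau>" and a2: "A2 D k A r \<kappa>"
    and kp: "0 < \<kappa>"
begin

abbreviation "RR \<equiv> supp k x"
abbreviation "II \<equiv> {i. i < D \<and> (\<exists>m\<in>RR. A i m \<noteq> 0)}"
abbreviation "om i \<equiv> (\<Sum>m\<in>RR. A i m * x m)"
abbreviation "uu w i \<equiv> (\<Sum>m\<in>RR. A i m * w m)"
abbreviation "QQ \<equiv> fisher D RR A x"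

lemma R_sub: "RR \<subseteq> {..<k}" unfolding supp_def by auto
lemma R_fin: "finite RR" using R_sub finite_subset by blast
lemma x_pos: "m \<in> RR \<Longrightarrow> x m > 0"
  using sx unfolding supp_def in_simplex_def by (simp add: less_le)
lemma x_zero: "m < k \<Longrightarrow> m \<notin> RR \<Longrightarrow> x m = 0"
  unfolding supp_def by auto
lemma A_nn: "i < D \<Longrightarrow> m \<in> RR \<Longrightarrow> A i m \<ge> 0"
  using wt R_sub unfolding word_topic_def by auto

lemma om_nn: "i < D \<Longrightarrow> om i \<ge> 0"
  using A_nn x_pos by (intro sum_nonneg) (simp add: less_imp_le)

lemma om_pos: assumes "i \<in> II" shows "om i > 0"
proof -
  from assms obtain m where m: "m \<in> RR" "A i m \<noteq> 0" and i: "i < D" by auto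
  have "A i m * x m > 0" using A_nn[OF i m(1)] m x_pos[OF m(1)] by simp
  thus ?thesis using R_fin m(1) A_nn[OF i] x_pos
    by (intro sum_pos2[of RR m]) (auto intro!: mult_nonneg_nonneg simp: less_imp_le)
qed

lemma II_fin: "finite II" by simp

lemma om_sum: "(\<Sum>i\<in>II. om i) \<le> 1"
proof -
  have "(\<Sum>i\<in>II. om i) \<le> (\<Sum>i<D. om i)"
    by (rule sum_mono2) (auto simp: om_nn)
  also have "\<dots> = (\<Sum>m\<in>RR. x m * (\<Sum>i<D. A i m))"
    by (subst sum.swap) (simp add: sum_distrib_left sum_distrib_right mult_ac)
  also have "\<dots> = (\<Sum>m\<in>RR. x m)"
    using wt R_sub unfolding word_topic_def by (intro sum.cong) auto
  also have "\<dots> = (\<Sum>m<k. x m)"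
    by (rule sum.mono_neutral_left) (use R_sub x_zero in auto)
  also have "\<dots> = 1" using sx unfolding in_simplex_def by simp
  finally show ?thesis .
qed

lemma Q_supp: "supported_on RR QQ" unfolding supported_on_def fisher_def by auto
lemma Q_sym: "smat QQ" unfolding smat_def fisher_def by (auto simp: mult.commute)

lemma Q_quad: "bil RR QQ w w = (\<Sum>i\<in>II. (uu w i)^2 / om i)"
proof -
  have "bil RR QQ w w = (\<Sum>j\<in>RR. \<Sum>l\<in>RR. \<Sum>i\<in>II. (A i j * w j) * (A i l * w l) / om i)"
    unfolding bil_def fisher_def
  proof (intro sum.cong refl)
    fix j l assume "j \<in> RR" "l \<in> RR"
    thus "w j * (if j \<in> RR \<and> l \<in> RR then \<Sum>i\<in>II. A i j * A i l / om i else 0) * w l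
       = (\<Sum>i\<in>II. A i j * w j * (A i l * w l) / om i)"
      by (simp add: sum_distrib_left sum_distrib_right mult_ac)
  qed
  also have "\<dots> = (\<Sum>j\<in>RR. \<Sum>i\<in>II. \<Sum>l\<in>RR. (A i j * w j) * (A i l * w l) / om i)"
    by (intro sum.cong refl sum.swap)
  also have "\<dots> = (\<Sum>i\<in>II. \<Sum>j\<in>RR. \<Sum>l\<in>RR. (A i j * w j) * (A i l * w l) / om i)"
    by (rule sum.swap)
  also have "\<dots> = (\<Sum>i\<in>II. (uu w i)^2 / om i)"
  proof (intro sum.cong refl)
    fix i
    show "(\<Sum>j\<in>RR. \<Sum>l\<in>RR. (A i j * w j) * (A i l * w l) / om i) = (uu w i)^2 / om i"
      unfolding power2_eq_square sum_product sum_divide_distrib by (simp add: mult_ac)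
  qed
  finally show ?thesis .
qed

lemma CS: "(\<Sum>i<D. \<bar>uu w i\<bar>)^2 \<le> bil RR QQ w w"
proof -
  have "(\<Sum>i<D. \<bar>uu w i\<bar>) = (\<Sum>i\<in>II. \<bar>uu w i\<bar>)"
    by (rule sum.mono_neutral_right) auto
  thus ?thesis unfolding Q_quad using weighted_cs[OF II_fin om_pos om_sum] by simp
qed

lemma A2_use: "(\<Sum>j\<in>RR. \<bar>w j\<bar>) / \<kappa> \<le> (\<Sum>i<D. \<bar>uu w i\<bar>)"
proof -
  define v where "v = (\<lambda>j. if j \<in> RR then w j else 0)"
  have "supp k v \<subseteq> RR" unfolding supp_def v_def by auto
  hence "card (supp k v) \<le> card RR" using R_fin card_mono by blast
  also have "\<dots> \<le> r" using a1 unfolding A1_def by simp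
  finally have c: "card (supp k v) \<le> r" .
  have e1: "(\<Sum>j<k. A i j * v j) = uu w i" for i
  proof -
    have "(\<Sum>j<k. A i j * v j) = (\<Sum>j<k. if j \<in> RR then A i j * w j else 0)"
      unfolding v_def by (intro sum.cong) auto
    also have "\<dots> = (\<Sum>j\<in>{..<k} \<inter> RR. A i j * w j)" by (simp add: sum.inter_restrict)
    also have "{..<k} \<inter> RR = RR" using R_sub by auto
    finally show ?thesis .
  qed
  have e2: "(\<Sum>j<k. \<bar>v j\<bar>) = (\<Sum>j\<in>RR. \<bar>w j\<bar>)"
  proof -
    have "(\<Sum>j<k. \<bar>v j\<bar>) = (\<Sum>j<k. if j \<in> RR then \<bar>w j\<bar> else 0)"
      unfolding v_def by (intro sum.cong) auto
    also have "\<dots> = (\<Sum>j\<in>{..<k} \<inter> RR. \<bar>w j\<bar>)" by (simp add: sum.inter_restrict)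
    also have "{..<k} \<inter> RR = RR" using R_sub by auto
    finally show ?thesis .
  qed
  have "(\<Sum>j<k. \<bar>v j\<bar>) / \<kappa> \<le> (\<Sum>i<D. \<bar>\<Sum>j<k. A i j * v j\<bar>)"
    using mp[OF spec[OF a2[unfolded A2_def], of v] c] .
  thus ?thesis unfolding e1 e2 .
qed

lemma Q_lower: "nrm RR z / \<kappa>^2 \<le> bil RR QQ z z"
proof -
  define L where "L = (\<Sum>j\<in>RR. \<bar>z j\<bar>)"
  have L0: "L \<ge> 0" unfolding L_def by (simp add: sum_nonneg)
  have "nrm RR z \<le> L^2"
    using sum_sq_le_sq_sum[of RR "\<lambda>j. \<bar>z j\<bar>"] R_fin unfolding nrm_def L_def by simp
  hence "nrm RR z / \<kappa>^2 \<le> (L / \<kappa>)^2" using kp by (simp add: power_divide divide_right_mono)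
  also have "\<dots> \<le> (\<Sum>i<D. \<bar>uu z i\<bar>)^2"
    using A2_use[of z] L0 kp unfolding L_def by (intro power_mono) auto
  also have "\<dots> \<le> bil RR QQ z z" by (rule CS)
  finally show ?thesis .
qed

end


lemma mm_scale: "mat_mult S (\<lambda>j l. a * M j l) (\<lambda>j l. b * N j l) = (\<lambda>j l. a * b * mat_mult S M N j l)"
  unfolding mat_mult_def by (simp add: sum_distrib_left mult_ac)

lemma bil_scaleM: "bil S (\<lambda>j l. a * M j l) x y = a * bil S M x y"
  unfolding bil_def by (simp add: sum_distrib_left mult_ac)

lemma bil_lin2: "bil S (\<lambda>j l. a * M j l - N j l) x y = a * bil S M x y - bil S N x y"
  unfolding bil_def by (simp add: algebra_simps sum_subtractf sum_distrib_left)

lemma bil_lin3: "bil S (\<lambda>j l. M j l - a * N j l) x y = bil S M x y - a * bil S N x y"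
  unfolding bil_def by (simp add: algebra_simps sum_subtractf sum_distrib_left)

lemma mv_id: "j \<in> S \<Longrightarrow> finite S \<Longrightarrow> mv S (id_on S) z j = z j"
proof -
  assume j: "j \<in> S" and f: "finite S"
  have "mv S (id_on S) z j = (\<Sum>l\<in>S. if l = j then z l else 0)"
    unfolding mv_def id_on_def using j by (intro sum.cong) auto
  thus ?thesis using j f by (simp add: sum.delta')
qed

context
  fixes D k r :: nat and A :: "nat \<Rightarrow> nat \<Rightarrow> real" and x :: "nat \<Rightarrow> real" and \<tau> \<kappa> :: real
  assumes wt: "word_topic D k A" and sx: "in_simplex k x" and a1: "A1 k x r \<tau>" and a2: "A2 D k A r \<kappa>"
    and kp: "0 < \<kappa>"
begin

abbreviation "R2 \<equiv> supp k x"
abbreviation "Q2 \<equiv> fisher D R2 A x"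

lemma main: "pos_def_on R2 Q2
    \<and> norm_2_1 {..<D} R2 (mat_mult R2 A (mat_inv_sqrt_on R2 Q2)) \<le> 1
    \<and> norm_2_1 R2 R2 (mat_inv_sqrt_on R2 Q2) \<le> \<kappa>
    \<and> loewner_ge R2 Q2 (\<lambda>j l. (1 / \<kappa>\<^sup>2) * id_on R2 j l)"
proof -
  note ctx = wt sx a1 a2 kp
  have fin: "finite R2" by (rule R_fin[OF ctx])
  have Qs: "supported_on R2 Q2" by (rule Q_supp[OF ctx])
  have Qy: "smat Q2" by (rule Q_sym[OF ctx])
  have Ql: "\<And>z. nrm R2 z / \<kappa>^2 \<le> bil R2 Q2 z z" by (rule Q_lower[OF ctx])
  define K where "K = (\<Sum>j\<in>R2. \<Sum>l\<in>R2. \<bar>Q2 j l\<bar>)"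
  define e where "e = 1 / \<kappa>^2"
  define c where "c = 1 / (K + e)"
  define X where "X = (\<lambda>j l. c * Q2 j l - id_on R2 j l)"
  define \<theta> where "\<theta> = 1 - c * e"
  have K0: "K \<ge> 0" unfolding K_def by (simp add: sum_nonneg)
  have e0: "e > 0" unfolding e_def using kp by simp
  have c0: "c > 0" unfolding c_def using K0 e0 by simp
  have ce1: "c * e \<le> 1" unfolding c_def using K0 e0 by simp
  have ce0: "c * e > 0" using c0 e0 by simp
  have cK1: "c * K \<le> 1" unfolding c_def using K0 e0 by simp
  have th0: "\<theta> \<ge> 0" unfolding \<theta>_def using ce1 by simp
  have th1: "\<theta> < 1" unfolding \<theta>_def using ce0 by simp
  have sX: "supported_on R2 X" using Qs unfolding X_def supported_on_def id_on_def by auto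
  have yX: "smat X" using Qy unfolding X_def smat_def id_on_def by auto
  have hX: "\<bar>bil R2 X z z\<bar> \<le> \<theta> * nrm R2 z" for z
  proof -
    define B where "B = bil R2 Q2 z z"
    define N where "N = nrm R2 z"
    have N0: "N \<ge> 0" unfolding N_def by (rule nrm_nonneg)
    have bx: "bil R2 X z z = c * B - N" unfolding X_def B_def N_def bil_lin2 bil_id[OF fin] ..
    have lo: "e * N \<le> B" using Ql[of z] unfolding e_def B_def N_def by simp
    have up: "B \<le> K * N" using bil_bound[OF fin, of Q2 z] unfolding K_def B_def N_def by simp
    have "c * (e * N) \<le> c * B" using lo c0 by (intro mult_left_mono) auto
    moreover have "c * B \<le> c * (K * N)" using up c0 by (intro mult_left_mono) auto
    moreover have "(c * K) * N \<le> 1 * N" using cK1 N0 by (intro mult_right_mono) auto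
    moreover have "\<theta> * N \<ge> 0" using th0 N0 by simp
    moreover have "(1 - c * e) * N = N - c * (e * N)" by (simp add: algebra_simps)
    moreover have "c * (K * N) = (c * K) * N" by simp
    ultimately have "\<bar>c * B - N\<bar> \<le> (1 - c * e) * N" by (simp only: abs_le_iff) linarith
    thus ?thesis unfolding bx \<theta>_def N_def .
  qed
  note FF = Fs_mult[OF fin sX yX th0 th1 hX] Fs0[OF fin sX yX th0 th1 hX] Fs1[OF fin sX yX th0 th1 hX]
    Fs_sym[OF fin sX yX th0 th1 hX] Fs_supp[OF fin sX yX th0 th1 hX] Fs_half_psd[OF fin sX yX th0 th1 hX]
  define F where "F = Fs R2 X"
  have F11: "mat_mult R2 (F (1/2)) (F (1/2)) = (\<lambda>j l. c * Q2 j l)"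
  proof (rule ext, rule ext)
    fix j l
    have "mat_mult R2 (F (1/2)) (F (1/2)) j l = F (1/2 + 1/2) j l" unfolding F_def by (rule FF(1)) auto
    also have "\<dots> = F 1 j l" by simp
    also have "\<dots> = c * Q2 j l" unfolding F_def FF(3) by (simp add: X_def)
    finally show "mat_mult R2 (F (1/2)) (F (1/2)) j l = c * Q2 j l" .
  qed
  have F10: "mat_mult R2 (F (1/2)) (F (-1/2)) = id_on R2" "mat_mult R2 (F (-1/2)) (F (1/2)) = id_on R2"
  proof -
    have "mat_mult R2 (F (1/2)) (F (-1/2)) j l = F 0 j l" for j l
      unfolding F_def using FF(1)[of "1/2" "-1/2"] by simp
    thus "mat_mult R2 (F (1/2)) (F (-1/2)) = id_on R2" unfolding F_def FF(2) by (intro ext) simp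
    have "mat_mult R2 (F (-1/2)) (F (1/2)) j l = F 0 j l" for j l
      unfolding F_def using FF(1)[of "-1/2" "1/2"] by simp
    thus "mat_mult R2 (F (-1/2)) (F (1/2)) = id_on R2" unfolding F_def FF(2) by (intro ext) simp
  qed
  define P where "P = (\<lambda>j l. (1 / sqrt c) * F (1/2) j l)"
  define Pi where "Pi = (\<lambda>j l. sqrt c * F (-1/2) j l)"
  have sP: "supported_on R2 P" using FF(5) unfolding P_def F_def supported_on_def by simp
  have sPi: "supported_on R2 Pi" using FF(5) unfolding Pi_def F_def supported_on_def by simp
  have yP: "smat P" using FF(4) unfolding P_def F_def smat_def by simp
  have pP: "bil R2 P z z \<ge> 0" for z
    unfolding P_def bil_scaleM using FF(6)[of z] c0 unfolding F_def by simp
  have PP: "mat_mult R2 P P = Q2"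
    unfolding P_def mm_scale F11 using c0 by (intro ext) (simp add: field_simps)
  have PPi: "mat_mult R2 P Pi = id_on R2" "mat_mult R2 Pi P = id_on R2"
    unfolding P_def Pi_def mm_scale F10 using c0 by (intro ext, simp)+
  have sqrtQ: "mat_sqrt_on R2 Q2 = P"
    unfolding mat_sqrt_on_def
  proof (rule the_equality)
    show "supported_on R2 P \<and> pos_semidef_on R2 P \<and> (\<forall>j\<in>R2. \<forall>l\<in>R2. mat_mult R2 P P j l = Q2 j l)"
      using sP pP yP PP unfolding pos_semidef_on_def symmetric_on_def quad_bil smat_def by auto
    fix P' assume h: "supported_on R2 P' \<and> pos_semidef_on R2 P' \<and> (\<forall>j\<in>R2. \<forall>l\<in>R2. mat_mult R2 P' P' j l = Q2 j l)"
    hence sP': "supported_on R2 P'" and yP': "smat P'" and pP': "\<And>z. bil R2 P' z z \<ge> 0"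
      using supp_sym_smat unfolding pos_semidef_on_def quad_bil by blast+
    have "mat_mult R2 P' P' = mat_mult R2 P P"
      by (rule supp_eq[OF supp_mm[OF sP' sP'] supp_mm[OF sP sP]]) (use h PP in auto)
    thus "P' = P" by (rule sqrt_unique[OF fin sP' sP yP' yP pP' pP])
  qed
  have invQ: "mat_inv_sqrt_on R2 Q2 = Pi"
    unfolding mat_inv_sqrt_on_def sqrtQ mat_inv_on_def
  proof (rule the_equality)
    show "supported_on R2 Pi \<and> (\<forall>j\<in>R2. \<forall>l\<in>R2. mat_mult R2 Pi P j l = id_on R2 j l \<and> mat_mult R2 P Pi j l = id_on R2 j l)"
      using sPi PPi by auto
    fix N assume "supported_on R2 N \<and> (\<forall>j\<in>R2. \<forall>l\<in>R2. mat_mult R2 N P j l = id_on R2 j l \<and> mat_mult R2 P N j l = id_on R2 j l)"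
    thus "N = Pi" using inv_unique[OF fin sP _ sPi, of N] PPi by auto
  qed
  have key: "(\<Sum>i<D. \<bar>\<Sum>m\<in>R2. A i m * mv R2 Pi z m\<bar>) \<le> 1" if nz: "nrm R2 z \<le> 1" for z
  proof -
    define w where "w = mv R2 Pi z"
    have "bil R2 Q2 w w = bil R2 P w (mv R2 P w)" unfolding PP[symmetric] bil_mm ..
    also have "\<dots> = nrm R2 (mv R2 P w)" unfolding bil_mvT[OF yP] nrm_def by (simp add: power2_eq_square)
    also have "mv R2 P w = mv R2 (id_on R2) z" unfolding w_def mv_mm[symmetric] PPi(1) ..
    also have "nrm R2 (mv R2 (id_on R2) z) = nrm R2 z" unfolding nrm_def using mv_id[OF _ fin] by simp
    finally have "bil R2 Q2 w w = nrm R2 z" .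
    hence "(\<Sum>i<D. \<bar>\<Sum>m\<in>R2. A i m * w m\<bar>)^2 \<le> 1^2" using CS[OF ctx, of w] nz by simp
    hence "(\<Sum>i<D. \<bar>\<Sum>m\<in>R2. A i m * w m\<bar>) \<le> 1" by (rule power2_le_imp_le) simp
    thus ?thesis unfolding w_def .
  qed
  have nz_eq: "(\<Sum>j\<in>R2. (z j)\<^sup>2) = nrm R2 z" for z unfolding nrm_def ..
  have b1: "norm_2_1 {..<D} R2 (mat_mult R2 A Pi) \<le> 1"
    unfolding norm_2_1_def
  proof (rule cSup_least)
    show "{\<Sum>i\<in>{..<D}. \<bar>\<Sum>j\<in>R2. mat_mult R2 A Pi i j * z j\<bar> |z. (\<Sum>j\<in>R2. (z j)\<^sup>2) \<le> 1} \<noteq> {}"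
      by (rule ccontr) (auto dest: spec[of _ "\<lambda>_. 0"])
    fix v assume "v \<in> {\<Sum>i\<in>{..<D}. \<bar>\<Sum>j\<in>R2. mat_mult R2 A Pi i j * z j\<bar> |z. (\<Sum>j\<in>R2. (z j)\<^sup>2) \<le> 1}"
    then obtain z where v: "v = (\<Sum>i\<in>{..<D}. \<bar>\<Sum>j\<in>R2. mat_mult R2 A Pi i j * z j\<bar>)" and nz: "nrm R2 z \<le> 1"
      unfolding nz_eq by blast
    have "(\<Sum>j\<in>R2. mat_mult R2 A Pi i j * z j) = (\<Sum>m\<in>R2. A i m * mv R2 Pi z m)" for i
      using mv_mm[of R2 A Pi z] unfolding mv_def by (metis (no_types, lifting))
    thus "v \<le> 1" unfolding v using key[OF nz] by simp
  qed
  have b2: "norm_2_1 R2 R2 Pi \<le> \<kappa>"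
    unfolding norm_2_1_def
  proof (rule cSup_least)
    show "{\<Sum>i\<in>R2. \<bar>\<Sum>j\<in>R2. Pi i j * z j\<bar> |z. (\<Sum>j\<in>R2. (z j)\<^sup>2) \<le> 1} \<noteq> {}"
      by (rule ccontr) (auto dest: spec[of _ "\<lambda>_. 0"])
    fix v assume "v \<in> {\<Sum>i\<in>R2. \<bar>\<Sum>j\<in>R2. Pi i j * z j\<bar> |z. (\<Sum>j\<in>R2. (z j)\<^sup>2) \<le> 1}"
    then obtain z where v: "v = (\<Sum>i\<in>R2. \<bar>\<Sum>j\<in>R2. Pi i j * z j\<bar>)" and nz: "nrm R2 z \<le> 1"
      unfolding nz_eq by blast
    have "v / \<kappa> \<le> (\<Sum>i<D. \<bar>\<Sum>m\<in>R2. A i m * mv R2 Pi z m\<bar>)"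
      unfolding v using A2_use[OF ctx, of "mv R2 Pi z"] unfolding mv_def .
    also have "\<dots> \<le> 1" by (rule key[OF nz])
    finally show "v \<le> \<kappa>" using kp by (simp add: divide_le_eq)
  qed
  have pd: "pos_def_on R2 Q2"
    unfolding pos_def_on_def
  proof
    show "symmetric_on R2 Q2" using Qy unfolding smat_def symmetric_on_def by simp
    show "\<forall>z. (\<exists>j\<in>R2. z j \<noteq> 0) \<longrightarrow> 0 < quad_form R2 Q2 z"
    proof (intro allI impI)
      fix z :: "nat \<Rightarrow> real" assume "\<exists>j\<in>R2. z j \<noteq> 0"
      then obtain j where j: "j \<in> R2" "z j \<noteq> 0" by blast
      have "0 < (z j)^2" using j by simp
      also have "\<dots> \<le> nrm R2 z" unfolding nrm_def using fin j by (intro member_le_sum) auto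
      finally have "0 < nrm R2 z / \<kappa>^2" using kp by simp
      also have "\<dots> \<le> quad_form R2 Q2 z" unfolding quad_bil by (rule Ql)
      finally show "0 < quad_form R2 Q2 z" .
    qed
  qed
  have lw: "loewner_ge R2 Q2 (\<lambda>j l. (1 / \<kappa>\<^sup>2) * id_on R2 j l)"
    unfolding loewner_ge_def pos_semidef_on_def
  proof
    show "symmetric_on R2 (\<lambda>j l. Q2 j l - 1 / \<kappa>\<^sup>2 * id_on R2 j l)"
      using Qy unfolding smat_def symmetric_on_def id_on_def by auto
    show "\<forall>z. 0 \<le> quad_form R2 (\<lambda>j l. Q2 j l - 1 / \<kappa>\<^sup>2 * id_on R2 j l) z"
      unfolding quad_bil bil_lin3 bil_id[OF fin] using Ql by simp
  qed
  show ?thesis unfolding invQ using pd b1 b2 lw by blast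
qed

end

theorem lemma5p4:
  fixes D k r :: nat and A :: "nat \<Rightarrow> nat \<Rightarrow> real" and x :: "nat \<Rightarrow> real"
    and \<tau> \<kappa> :: real
  assumes "word_topic D k A"
    and "in_simplex k x"
    and "0 < \<tau>" and "\<tau> \<le> 1" and "0 < \<kappa>"
    and "A1 k x r \<tau>"
    and "A2 D k A r \<kappa>"
  defines "R \<equiv> supp k x"
  defines "Q \<equiv> fisher D R A x"
  shows "pos_def_on R Q
    \<and> norm_2_1 {..<D} R (mat_mult R A (mat_inv_sqrt_on R Q)) \<le> 1
    \<and> norm_2_1 R R (mat_inv_sqrt_on R Q) \<le> \<kappa>
    \<and> loewner_ge R Q (\<lambda>j l. (1 / \<kappa>\<^sup>2) * id_on R j l)"
  unfolding R_def Q_def by (rule main[OF assms(1,2,6,7,5)])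

end
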